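(* Let $N\ge1$ and for $1\le i\le N$ and integers $x\ge1$ let $\Theta_i(x)=\binom{x+i-2}{x-1}$. Then for all $1\le i,j\le N$, \[\sum_{x=1}^\infty\sum_{y=1}^\infty\Theta_i(x)\,Q_{1,1}(x,y)\,\Theta_j(y)=Q_{i+1,j+1}(1,1).\]
   Context: Fix $\alpha\ge0$, $t\ge0$. For integers $k,\ell,x,y$, \[Q_{k,\ell}(x,y)=\alpha^2\oint_\beta\frac{{\rm d} v}{2\pi\mathrm{i}}\oint_\beta\frac{{\rm d} w}{2\pi\mathrm{i}}\frac{v-w}{1-v-w}\frac{w^{k-x}\mathrm{e}^{t(w-1)}}{(w-\alpha)(w-1)^k}\frac{v^{\ell-y}\mathrm{e}^{t(v-1)}}{(v-\alpha)(v-1)^\ell},\] where $\beta$ is a positively oriented closed contour surrounding $0,1,\alpha,1-\alpha$ and omitting other singularities (the apparent singularity at $v+w=1$ contributes nothing). *)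

theory Defs
  imports "HOL-Complex_Analysis.Complex_Analysis"
begin

definition Q_integrand :: "real \<Rightarrow> real \<Rightarrow> int \<Rightarrow> int \<Rightarrow> int \<Rightarrow> int \<Rightarrow> complex \<Rightarrow> complex \<Rightarrow> complex" where
  "Q_integrand \<alpha> t k l x y v w =
     (v - w) / (1 - v - w)
     * (w powi (k - x) * exp (of_real t * (w - 1)) / ((w - of_real \<alpha>) * (w - 1) powi k))
     * (v powi (l - y) * exp (of_real t * (v - 1)) / ((v - of_real \<alpha>) * (v - 1) powi l))"

text \<open>Realization of the contour beta: circles centred at 1/2 (which surround 0, 1, alpha, 1-alpha,
  the only singularities other than v+w=1).  The v-circle has radius alpha+2, the w-circle radius
  alpha+3; the radii differ so that v+w=1 never occurs on the contours (if |v-1/2| = |w-1/2| were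
  allowed, w = 1-v would lie on the contour).  By the stated fact that the apparent singularity
  at v+w=1 contributes nothing, this choice is immaterial.\<close>
definition Q :: "real \<Rightarrow> real \<Rightarrow> int \<Rightarrow> int \<Rightarrow> int \<Rightarrow> int \<Rightarrow> complex" where
  "Q \<alpha> t k l x y =
     complex_of_real (\<alpha>^2) *
     contour_integral (circlepath (1/2) (\<alpha> + 2))
       (\<lambda>v. contour_integral (circlepath (1/2) (\<alpha> + 3))
               (\<lambda>w. Q_integrand \<alpha> t k l x y v w) / (2 * pi * \<i>)) / (2 * pi * \<i>)"

definition Theta :: "nat \<Rightarrow> nat \<Rightarrow> nat" where
  "Theta i x = (x + i - 2) choose (x - 1)"

end

theory Submission
  imports Defs
begin


lemma cint_series_circ:
  fixes g :: "nat \<Rightarrow> complex \<Rightarrow> complex"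
  assumes r: "r > 0" and cont: "\<And>k. continuous_on (sphere c r) (g k)"
    and bd: "\<And>k w. w \<in> sphere c r \<Longrightarrow> norm (g k w) \<le> M k" and sm: "summable M"
  shows "(\<lambda>k. contour_integral (circlepath c r) (g k)) sums
          contour_integral (circlepath c r) (\<lambda>w. \<Sum>k. g k w)"
proof -
  have ul: "uniform_limit (sphere c r) (\<lambda>n w. \<Sum>k<n. g k w) (\<lambda>w. \<Sum>k. g k w) sequentially"
    by (rule Weierstrass_m_test[OF bd sm]) auto
  have int: "\<And>k. g k contour_integrable_on circlepath c r"
    using cont r by (intro contour_integrable_continuous_circlepath) auto
  have "((\<lambda>n. contour_integral (circlepath c r) (\<lambda>w. \<Sum>k<n. g k w)) \<longlongrightarrow>
          contour_integral (circlepath c r) (\<lambda>w. \<Sum>k. g k w)) sequentially"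
    by (rule contour_integral_uniform_limit_circlepath[OF _ ul _ r])
       (auto intro!: always_eventually contour_integrable_sum int)
  moreover have "contour_integral (circlepath c r) (\<lambda>w. \<Sum>k<n. g k w) = (\<Sum>k<n. contour_integral (circlepath c r) (g k))" for n
    by (rule contour_integral_sum) (auto intro: int)
  ultimately show ?thesis
    unfolding sums_def by simp
qed

lemma cint_param_cont:
  fixes f :: "complex \<Rightarrow> complex \<Rightarrow> complex"
  assumes S: "compact S" and r: "r > 0"
    and cont: "continuous_on (S \<times> sphere c r) (\<lambda>(v,w). f v w)"
  shows "continuous_on S (\<lambda>v. contour_integral (circlepath c r) (f v))"
proof -
  have uc: "uniformly_continuous_on (S \<times> sphere c r) (\<lambda>(v,w). f v w)"
    using S cont by (intro compact_uniformly_continuous) (auto intro: compact_Times)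
  have contv: "continuous_on (sphere c r) (f v)" if "v \<in> S" for v
  proof -
    have "continuous_on (sphere c r) ((\<lambda>(v,w). f v w) \<circ> (\<lambda>w. (v,w)))"
      by (rule continuous_on_compose) (auto intro!: continuous_intros continuous_on_subset[OF cont] simp: that)
    then show ?thesis by (simp add: o_def)
  qed
  have int: "f v contour_integrable_on circlepath c r" if "v \<in> S" for v
    using contv[OF that] r by (intro contour_integrable_continuous_circlepath) auto
  show ?thesis
    unfolding continuous_on_iff
  proof (intro ballI allI impI)
    fix v e assume v: "v \<in> S" and e: "(0::real) < e"
    define e' where "e' = e / (2 * (2*pi*r))"
    have e': "e' > 0" using e r by (simp add: e'_def)
    obtain d where d: "d > 0" and dd: "\<And>x x'. x \<in> S \<times> sphere c r \<Longrightarrow> x' \<in> S \<times> sphere c r \<Longrightarrow>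
        dist x' x < d \<Longrightarrow> dist ((\<lambda>(v,w). f v w) x') ((\<lambda>(v,w). f v w) x) < e'"
      using uc e' unfolding uniformly_continuous_on_def by metis
    show "\<exists>d>0. \<forall>v'\<in>S. dist v' v < d \<longrightarrow>
        dist (contour_integral (circlepath c r) (f v')) (contour_integral (circlepath c r) (f v)) < e"
    proof (intro exI[of _ d] conjI ballI impI d)
      fix v' assume v': "v' \<in> S" and dv: "dist v' v < d"
      have b: "norm (f v' w - f v w) \<le> e'" if "norm (w - c) = r" for w
      proof -
        have w: "w \<in> sphere c r" using that by (simp add: dist_norm norm_minus_commute)
        have "dist (v', w) (v, w) < d" using dv by (simp add: dist_Pair_Pair)
        from dd[of "(v,w)" "(v',w)"] this v v' w show ?thesis by (simp add: dist_norm)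
      qed
      have "norm (contour_integral (circlepath c r) (\<lambda>w. f v' w - f v w)) \<le> e' * (2*pi*r)"
        by (rule has_contour_integral_bound_circlepath[OF has_contour_integral_integral])
           (use b r e' in \<open>auto intro!: contour_integrable_diff int v v'\<close>)
      also have "\<dots> < e" using e r by (simp add: e'_def)
      finally show "dist (contour_integral (circlepath c r) (f v')) (contour_integral (circlepath c r) (f v)) < e"
        by (simp add: dist_norm contour_integral_diff[OF int[OF v'] int[OF v]])
    qed
  qed
qed

lemma negbin:
  fixes u :: complex
  assumes "norm u < 1"
  shows "(\<lambda>m. of_nat ((m + i - 1) choose m) * u ^ m) sums (1 / (1 - u) ^ i)"
proof (cases "i = 0")
  case True
  have "(\<lambda>m. of_nat ((m + i - 1) choose m) * u ^ m) = (\<lambda>m. if m = 0 then 1 else 0)"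
    using True by (auto simp: fun_eq_iff)
  then show ?thesis using True sums_single[of 0 "\<lambda>_. 1::complex"] by (simp add: if_distrib)
next
  case False
  have n: "norm (-u) < 1" using assms by simp
  from gen_binomial_complex[OF n, of "- of_nat i"]
  have "(\<lambda>m. (- of_nat i gchoose m) * (- u) ^ m) sums (1 + - u) powr (- of_nat i)" .
  moreover have "(- of_nat i gchoose m) * (- u) ^ m = of_nat ((m + i - 1) choose m) * u ^ m" for m
  proof -
    have "(- of_nat i gchoose m) = (-1)^m * ((of_nat i + of_nat m - 1) gchoose m :: complex)"
      by (rule gbinomial_minus)
    also have "(of_nat i + of_nat m - 1 :: complex) = of_nat (m + i - 1)" using False by (simp add: of_nat_diff)
    also have "(of_nat (m + i - 1) gchoose m :: complex) = of_nat ((m + i - 1) choose m)"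
      by (rule binomial_gbinomial[symmetric])
    finally have g: "(- of_nat i gchoose m) = (-1)^m * (of_nat ((m + i - 1) choose m) :: complex)" .
    have p: "(-u)^m = (-1)^m * u^m" by (rule power_minus)
    have q: "(-1::complex)^m * (-1)^m = 1" by (simp flip: power_mult_distrib)
    have "(- of_nat i gchoose m) * (- u) ^ m = ((-1::complex)^m * (-1)^m) * (of_nat ((m + i - 1) choose m) * u ^ m)"
      unfolding g p by (simp only: mult_ac)
    then show ?thesis unfolding q by simp
  qed
  moreover have "(1 + - u) powr (- of_nat i) = 1 / (1 - u) ^ i"
  proof -
    have nz: "1 - u \<noteq> 0" using assms by auto
    have "(1 + - u) powr (- of_nat i) = 1 / ((1 - u) powr of_nat i)"
      by (subst powr_minus_divide) simp
    also have "(1 - u) powr of_nat i = (1 - u) ^ i" using nz by (rule powr_nat'[OF disjI1])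
    finally show ?thesis .
  qed
  ultimately show ?thesis by simp
qed


definition Fk :: "real \<Rightarrow> real \<Rightarrow> int \<Rightarrow> int \<Rightarrow> complex \<Rightarrow> complex" where
  "Fk \<alpha> t k x w = w powi (k - x) * exp (of_real t * (w - 1)) / ((w - of_real \<alpha>) * (w - 1) powi k)"
definition KK :: "complex \<Rightarrow> complex \<Rightarrow> complex" where "KK v w = (v - w) / (1 - v - w)"
definition EE :: "real \<Rightarrow> real \<Rightarrow> complex \<Rightarrow> complex" where
  "EE \<alpha> t w = exp (of_real t * (w - 1)) / ((w - of_real \<alpha>) * (w - 1))"

lemma Q_integrand_split: "Q_integrand \<alpha> t k l x y v w = KK v w * Fk \<alpha> t k x w * Fk \<alpha> t l y v"
  by (simp add: Q_integrand_def Fk_def KK_def)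

lemma Fk_1: "w \<noteq> 0 \<Longrightarrow> Fk \<alpha> t 1 (int (Suc m)) w = (1/w)^m * EE \<alpha> t w"
proof -
  assume w: "w \<noteq> 0"
  have e: "1 - int (Suc m) = - int m" by simp
  show ?thesis unfolding Fk_def EE_def e
    by (simp add: power_int_minus power_one_over divide_inverse mult_ac power_inverse)
qed

lemma Fk_i: "w \<noteq> 0 \<Longrightarrow> w \<noteq> 1 \<Longrightarrow> Fk \<alpha> t (int i + 1) 1 w = EE \<alpha> t w * (1 / (1 - 1/w)^i)"
proof -
  assume w: "w \<noteq> 0" "w \<noteq> 1"
  have e1: "int i + 1 - 1 = int i" by simp
  have e2: "int i + 1 = int (Suc i)" by simp
  have e3: "1 - 1/w = (w - 1)/w" using w by (simp add: field_simps)
  have w1: "w - 1 \<noteq> 0" using w by simp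
  show ?thesis unfolding Fk_def EE_def e1 e3
    apply (subst e2)
    unfolding power_int_of_nat
    using w w1 by (simp add: power_divide field_simps)
qed

lemma sph_far:
  fixes z a c :: complex
  assumes "z \<in> sphere c R"
  shows "R - norm (a - c) \<le> norm (z - a)"
proof -
  have "norm (z - c) \<le> norm (z - a) + norm (a - c)"
    using norm_triangle_ineq[of "z - a" "a - c"] by simp
  moreover have "norm (z - c) = R" using assms by (simp add: dist_norm norm_minus_commute)
  ultimately show ?thesis by simp
qed

lemma cbound:
  fixes f :: "'a::topological_space \<Rightarrow> 'b::real_normed_vector"
  assumes "compact S" "continuous_on S f"
  obtains B where "B \<ge> 0" "\<And>x. x \<in> S \<Longrightarrow> norm (f x) \<le> B"
proof -
  have "bounded (f ` S)" by (rule compact_imp_bounded[OF compact_continuous_image[OF assms(2,1)]])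
  then obtain B where B: "\<And>x. x \<in> S \<Longrightarrow> norm (f x) \<le> B" by (auto simp: bounded_iff)
  show ?thesis by (rule that[of "max B 0"]) (auto intro: order_trans[OF B])
qed

lemma negbin_real:
  assumes "0 \<le> r" "r < 1"
  shows "summable (\<lambda>m. real ((m + i - 1) choose m) * r ^ m)"
proof -
  have "norm (complex_of_real r) < 1" using assms by simp
  from sums_summable[OF negbin[OF this, of i]]
  have "summable (\<lambda>m. complex_of_real (real ((m + i - 1) choose m) * r ^ m))" by simp
  then show ?thesis by (simp only: summable_complex_of_real)
qed



lemma inv_norm_le:
  fixes w :: complex assumes c: "c > 0" and w: "norm w \<ge> c"
  shows "norm (1/w) \<le> 1/c"
proof -
  have p: "norm w > 0" using c w by linarith
  have "1 / norm w \<le> 1 / c" using c w p by (intro divide_left_mono) auto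
  then show ?thesis by (simp add: norm_divide)
qed

lemma lemmaB3_main:
  fixes \<alpha> t :: real and i j :: nat
  assumes \<alpha>: "\<alpha> \<ge> 0" and i: "i \<ge> 1" and j: "j \<ge> 1"
  shows "(\<Sum>x. \<Sum>y. of_nat (Theta i (Suc x)) * Q \<alpha> t 1 1 (int (Suc x)) (int (Suc y))
                     * of_nat (Theta j (Suc y)))
         = Q \<alpha> t (int i + 1) (int j + 1) 1 1"
proof -
  define Sv where "Sv = sphere (1/2::complex) (\<alpha>+2)"
  define Sw where "Sw = sphere (1/2::complex) (\<alpha>+3)"
  define Cv where "Cv = circlepath (1/2::complex) (\<alpha>+2)"
  define Cw where "Cw = circlepath (1/2::complex) (\<alpha>+3)"
  define d where "d = 2 * complex_of_real pi * \<i>"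
  define c0 where "c0 = complex_of_real (\<alpha>^2)"
  define E where "E = EE \<alpha> t"
  define A where "A = (\<lambda>(m::nat) w. (1/w)^m * E w)"
  define P where "P = (\<lambda>m. of_nat ((m + i - 1) choose m) :: complex)"
  define R where "R = (\<lambda>m. of_nat ((m + j - 1) choose m) :: complex)"
  define P' where "P' = (\<lambda>m. real ((m + i - 1) choose m))"
  define R' where "R' = (\<lambda>m. real ((m + j - 1) choose m))"
  define Ai where "Ai = (\<lambda>w. E w * (1 / (1 - 1/w)^i))"
  define Aj where "Aj = (\<lambda>w. E w * (1 / (1 - 1/w)^j))"
  define h where "h = (\<lambda>m v. contour_integral Cw (\<lambda>w. KK v w * A m w) / d)"
  have dnz: "d \<noteq> 0" and nd: "norm d = 2 * pi" by (auto simp: d_def norm_mult)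
  have nP: "norm (P m) = P' m" for m by (simp add: P_def P'_def)
  have nR: "norm (R m) = R' m" for m by (simp add: R_def R'_def)
  have P'0: "P' m \<ge> 0" for m by (simp add: P'_def)
  have R'0: "R' m \<ge> 0" for m by (simp add: R'_def)
  have ThP: "of_nat (Theta i (Suc m)) = P m" for m
  proof -
    have "Suc m + i - 2 = m + i - 1" using i by arith
    then show ?thesis by (simp add: Theta_def P_def)
  qed
  have ThR: "of_nat (Theta j (Suc m)) = R m" for m
  proof -
    have "Suc m + j - 2 = m + j - 1" using j by arith
    then show ?thesis by (simp add: Theta_def R_def)
  qed
  have nah: "norm (of_real \<alpha> - 1/2 :: complex) \<le> \<alpha> + 1/2"
  proof -
    have "norm (of_real \<alpha> - 1/2 :: complex) = norm (of_real (\<alpha> - 1/2) :: complex)" by simp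
    also have "\<dots> = \<bar>\<alpha> - 1/2\<bar>" by (simp only: norm_of_real)
    finally show ?thesis using \<alpha> by simp
  qed
  have wS: "w \<noteq> 0" "w \<noteq> 1" "w \<noteq> of_real \<alpha>" "norm w \<ge> 5/2" if "w \<in> Sw" for w
  proof -
    have a: "\<alpha> + 3 - norm (a - 1/2) \<le> norm (w - a)" for a
      using sph_far[of w "1/2" "\<alpha>+3" a] that by (simp add: Sw_def)
    from a[of 0] \<alpha> show "norm w \<ge> 5/2" by simp
    then show "w \<noteq> 0" by auto
    from a[of 1] \<alpha> show "w \<noteq> 1" by auto
    from a[of "of_real \<alpha>"] nah show "w \<noteq> of_real \<alpha>" by auto
  qed
  have vS: "v \<noteq> 0" "v \<noteq> 1" "v \<noteq> of_real \<alpha>" "norm v \<ge> 3/2" if "v \<in> Sv" for v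
  proof -
    have a: "\<alpha> + 2 - norm (a - 1/2) \<le> norm (v - a)" for a
      using sph_far[of v "1/2" "\<alpha>+2" a] that by (simp add: Sv_def)
    from a[of 0] \<alpha> show "norm v \<ge> 3/2" by simp
    then show "v \<noteq> 0" by auto
    from a[of 1] \<alpha> show "v \<noteq> 1" by auto
    from a[of "of_real \<alpha>"] nah show "v \<noteq> of_real \<alpha>" by auto
  qed
  have vw: "1 - v - w \<noteq> 0" if "v \<in> Sv" "w \<in> Sw" for v w
  proof -
    have "norm (w - 1/2) - norm (1/2 - v) \<le> norm ((w - 1/2) - (1/2 - v))"
      by (rule norm_triangle_ineq2)
    moreover have "norm (w - 1/2) = \<alpha> + 3" "norm (1/2 - v) = \<alpha> + 2"
      using that by (auto simp: Sv_def Sw_def dist_norm norm_minus_commute)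
    ultimately have "norm (w + v - 1) \<ge> 1" by (simp add: algebra_simps)
    then show ?thesis by (auto simp: algebra_simps)
  qed
  have piCv: "path_image Cv = Sv" and piCw: "path_image Cw = Sw"
    using \<alpha> by (auto simp: Cv_def Sv_def Cw_def Sw_def)
  have cS: "compact Sv" "compact Sw" by (auto simp: Sv_def Sw_def)
  have intCv: "f contour_integrable_on Cv" if "continuous_on Sv f" for f
    using that piCv unfolding Cv_def by (intro contour_integrable_continuous_circlepath) auto
  have intCw: "f contour_integrable_on Cw" if "continuous_on Sw f" for f
    using that piCw unfolding Cw_def by (intro contour_integrable_continuous_circlepath) auto
  have inv1: "1 - 1 / z \<noteq> 0" if "z \<noteq> 0" "z \<noteq> 1" for z :: complex
    using that by (auto simp: field_simps)
  have contEw: "continuous_on Sw E"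
    unfolding E_def EE_def by (intro continuous_intros) (use wS in auto)
  have contEv: "continuous_on Sv E"
    unfolding E_def EE_def by (intro continuous_intros) (use vS in auto)
  have contAw: "continuous_on Sw (A m)" for m
    unfolding A_def by (intro continuous_intros contEw) (use wS in auto)
  have contAv: "continuous_on Sv (A m)" for m
    unfolding A_def by (intro continuous_intros contEv) (use vS in auto)
  have contAj: "continuous_on Sv Aj"
    unfolding Aj_def by (intro continuous_intros contEv) (use vS inv1 in auto)
  have contKAw: "continuous_on Sw (\<lambda>w. KK v w * A m w)" if "v \<in> Sv" for v m
    unfolding KK_def by (intro continuous_intros contAw) (use vw that in auto)
  have contKAiw: "continuous_on Sw (\<lambda>w. KK v w * Ai w)" if "v \<in> Sv" for v
  proof -
    have "continuous_on Sw Ai"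
      unfolding Ai_def by (intro continuous_intros contEw) (use wS inv1 in auto)
    then show ?thesis
      unfolding KK_def by (intro continuous_intros) (use vw that in auto)
  qed
  have vw': "\<forall>p\<in>Sv \<times> Sw. 1 - fst p - snd p \<noteq> 0" using vw by auto
  have contK: "continuous_on (Sv \<times> Sw) (\<lambda>p. KK (fst p) (snd p))"
    unfolding KK_def by (intro continuous_on_divide continuous_intros vw')
  have contsnd: "continuous_on (Sv \<times> Sw) (\<lambda>p. f (snd p))" if "continuous_on Sw f" for f
    by (rule continuous_on_compose2[OF that continuous_on_snd]) auto
  have contKA: "continuous_on (Sv \<times> Sw) (\<lambda>(v,w). KK v w * A m w)" for m
    unfolding case_prod_unfold by (intro continuous_on_mult contK contsnd contAw)
  have contKE: "continuous_on (Sv \<times> Sw) (\<lambda>(v,w). KK v w * E w)"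
    unfolding case_prod_unfold by (intro continuous_on_mult contK contsnd contEw)
  obtain KEB where KEB0: "KEB \<ge> 0" and KEBp: "\<And>p. p \<in> Sv \<times> Sw \<Longrightarrow> norm ((\<lambda>(v,w). KK v w * E w) p) \<le> KEB"
    using cbound[OF compact_Times[OF cS] contKE] by blast
  have KEB: "norm (KK v w * E w) \<le> KEB" if "v \<in> Sv" "w \<in> Sw" for v w
    using KEBp[of "(v,w)"] that by simp
  obtain EVB where EVB0: "EVB \<ge> 0" and EVB: "\<And>v. v \<in> Sv \<Longrightarrow> norm (E v) \<le> EVB"
    using cbound[OF cS(1) contEv] by blast
  obtain AJB where AJB0: "AJB \<ge> 0" and AJB: "\<And>v. v \<in> Sv \<Longrightarrow> norm (Aj v) \<le> AJB"
    using cbound[OF cS(1) contAj] by blast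
  have hcont: "continuous_on Sv (h m)" for m
  proof -
    have "continuous_on Sv (\<lambda>v. contour_integral Cw (\<lambda>w. KK v w * A m w))"
      unfolding Cw_def Sv_def
      by (rule cint_param_cont) (use \<alpha> contKA cS in \<open>auto simp: Sv_def Sw_def\<close>)
    then show ?thesis unfolding h_def using dnz by (intro continuous_intros) auto
  qed
  have KAb: "norm (KK v w * A m w) \<le> KEB * (2/5)^m" if "v \<in> Sv" "w \<in> Sw" for v w m
  proof -
    have "norm (1/w) \<le> 2/5" using inv_norm_le[OF _ wS(4)[OF that(2)]] by simp
    then have "norm (1/w)^m \<le> (2/5)^m" by (intro power_mono) auto
    then have "norm ((1/w)^m) * norm (KK v w * E w) \<le> (2/5)^m * KEB"
      by (intro mult_mono KEB that) (auto simp: norm_power)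
    moreover have "norm (KK v w * A m w) = norm ((1/w)^m) * norm (KK v w * E w)"
      by (simp add: A_def norm_mult)
    ultimately show ?thesis by (simp add: mult.commute)
  qed
  have hbound: "norm (h m v) \<le> KEB * (2/5)^m * (\<alpha>+3)" if "v \<in> Sv" for m v
  proof -
    have "norm (contour_integral Cw (\<lambda>w. KK v w * A m w)) \<le> KEB * (2/5)^m * (2*pi*(\<alpha>+3))"
      unfolding Cw_def
      by (rule has_contour_integral_bound_circlepath[OF has_contour_integral_integral])
        (use intCw[OF contKAw[OF that]] KEB0 \<alpha> KAb[OF that] in \<open>auto simp: Cw_def Sw_def dist_norm norm_minus_commute\<close>)
    then show ?thesis unfolding h_def by (simp add: norm_divide nd field_simps)
  qed
  have summP: "summable (\<lambda>m. P' m * (2/5)^m)" unfolding P'_def by (rule negbin_real) auto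
  have summR: "summable (\<lambda>m. R' m * (2/3)^m)" unfolding R'_def by (rule negbin_real) auto
  have Psum: "(\<lambda>m. P m * A m w) sums Ai w" if "w \<in> Sw" for w
  proof -
    have "norm (1/w) < 1" using inv_norm_le[OF _ wS(4)[OF that]] by simp
    from sums_mult2[OF negbin[OF this, of i], of "E w"]
    show ?thesis by (simp add: P_def A_def Ai_def mult_ac)
  qed
  have Rsum: "(\<lambda>m. R m * A m v) sums Aj v" if "v \<in> Sv" for v
  proof -
    have "norm (1/v) < 1" using inv_norm_le[OF _ vS(4)[OF that]] by simp
    from sums_mult2[OF negbin[OF this, of j], of "E v"]
    show ?thesis by (simp add: R_def A_def Aj_def mult_ac)
  qed
  have Qmn: "Q \<alpha> t 1 1 (int (Suc m)) (int (Suc n)) = c0 * contour_integral Cv (\<lambda>v. h m v * A n v) / d" for m n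
  proof -
    have "contour_integral Cw (\<lambda>w. Q_integrand \<alpha> t 1 1 (int (Suc m)) (int (Suc n)) v w) / d = h m v * A n v"
      if "v \<in> Sv" for v
    proof -
      have "contour_integral Cw (\<lambda>w. Q_integrand \<alpha> t 1 1 (int (Suc m)) (int (Suc n)) v w)
          = contour_integral Cw (\<lambda>w. KK v w * A m w * A n v)"
      proof (rule contour_integral_eq)
        fix w assume "w \<in> path_image Cw"
        then have w: "w \<in> Sw" by (simp add: piCw)
        show "Q_integrand \<alpha> t 1 1 (int (Suc m)) (int (Suc n)) v w = KK v w * A m w * A n v"
          unfolding Q_integrand_split Fk_1[OF wS(1)[OF w]] Fk_1[OF vS(1)[OF that]] A_def E_def ..
      qed
      also have "\<dots> = contour_integral Cw (\<lambda>w. KK v w * A m w) * A n v"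
        by (rule contour_integral_rmul[OF intCw[OF contKAw[OF that]]])
      finally show ?thesis by (simp add: h_def)
    qed
    then have "contour_integral Cv (\<lambda>v. contour_integral Cw (\<lambda>w. Q_integrand \<alpha> t 1 1 (int (Suc m)) (int (Suc n)) v w) / d)
       = contour_integral Cv (\<lambda>v. h m v * A n v)"
      by (intro contour_integral_eq) (auto simp: piCv)
    then show ?thesis by (simp add: Q_def c0_def Cv_def Cw_def d_def)
  qed
  have Qij: "Q \<alpha> t (int i + 1) (int j + 1) 1 1
      = c0 * contour_integral Cv (\<lambda>v. (contour_integral Cw (\<lambda>w. KK v w * Ai w) / d) * Aj v) / d"
  proof -
    have "contour_integral Cw (\<lambda>w. Q_integrand \<alpha> t (int i + 1) (int j + 1) 1 1 v w) / d
        = (contour_integral Cw (\<lambda>w. KK v w * Ai w) / d) * Aj v"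
      if "v \<in> Sv" for v
    proof -
      have "contour_integral Cw (\<lambda>w. Q_integrand \<alpha> t (int i + 1) (int j + 1) 1 1 v w)
          = contour_integral Cw (\<lambda>w. KK v w * Ai w * Aj v)"
      proof (rule contour_integral_eq)
        fix w assume "w \<in> path_image Cw"
        then have w: "w \<in> Sw" by (simp add: piCw)
        show "Q_integrand \<alpha> t (int i + 1) (int j + 1) 1 1 v w = KK v w * Ai w * Aj v"
          unfolding Q_integrand_split Fk_i[OF wS(1,2)[OF w]] Fk_i[OF vS(1,2)[OF that]] Ai_def Aj_def E_def ..
      qed
      also have "\<dots> = contour_integral Cw (\<lambda>w. KK v w * Ai w) * Aj v"
        by (rule contour_integral_rmul[OF intCw[OF contKAiw[OF that]]])
      finally show ?thesis by simp
    qed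
    then have "contour_integral Cv (\<lambda>v. contour_integral Cw (\<lambda>w. Q_integrand \<alpha> t (int i + 1) (int j + 1) 1 1 v w) / d)
       = contour_integral Cv (\<lambda>v. (contour_integral Cw (\<lambda>w. KK v w * Ai w) / d) * Aj v)"
      by (intro contour_integral_eq) (auto simp: piCv)
    then show ?thesis by (simp add: Q_def c0_def Cv_def Cw_def d_def)
  qed
  have inner: "(\<lambda>n. P m * Q \<alpha> t 1 1 (int (Suc m)) (int (Suc n)) * R n) sums
      (P m * c0 / d * contour_integral Cv (\<lambda>v. h m v * Aj v))" for m
  proof -
    have s: "(\<lambda>n. contour_integral Cv (\<lambda>v. R n * (h m v * A n v))) sums
        contour_integral Cv (\<lambda>v. \<Sum>n. R n * (h m v * A n v))"
      unfolding Cv_def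
    proof (rule cint_series_circ[where M = "\<lambda>n. R' n * (2/3)^n * (KEB * (2/5)^m * (\<alpha>+3) * EVB)"])
      show "0 < \<alpha> + 2" using \<alpha> by simp
      show "continuous_on (sphere (1/2) (\<alpha>+2)) (\<lambda>v. R n * (h m v * A n v))" for n
        unfolding Sv_def[symmetric] by (intro continuous_intros hcont contAv)
      show "summable (\<lambda>n. R' n * (2/3)^n * (KEB * (2/5)^m * (\<alpha>+3) * EVB))"
        by (intro summable_mult2 summR)
      show "norm (R n * (h m v * A n v)) \<le> R' n * (2/3)^n * (KEB * (2/5)^m * (\<alpha>+3) * EVB)"
        if "v \<in> sphere (1/2) (\<alpha>+2)" for n v
      proof -
        have v: "v \<in> Sv" using that by (simp add: Sv_def)
        have "norm (1/v) \<le> 2/3" using inv_norm_le[OF _ vS(4)[OF v]] by simp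
        then have "norm (1/v)^n \<le> (2/3)^n" by (intro power_mono) auto
        then have An: "norm (A n v) \<le> (2/3)^n * EVB"
          unfolding A_def norm_mult norm_power by (intro mult_mono EVB v) auto
        have "norm (R n * (h m v * A n v)) = R' n * (norm (h m v) * norm (A n v))"
          by (simp add: norm_mult nR)
        also have "\<dots> \<le> R' n * ((KEB * (2/5)^m * (\<alpha>+3)) * ((2/3)^n * EVB))"
          by (intro mult_left_mono mult_mono hbound v An R'0) (use KEB0 \<alpha> in auto)
        finally show ?thesis by (simp add: mult_ac)
      qed
    qed
    have e1: "contour_integral Cv (\<lambda>v. R n * (h m v * A n v)) = R n * contour_integral Cv (\<lambda>v. h m v * A n v)" for n
      by (rule contour_integral_lmul[OF intCv]) (intro continuous_intros hcont contAv)
    have e2: "contour_integral Cv (\<lambda>v. \<Sum>n. R n * (h m v * A n v)) = contour_integral Cv (\<lambda>v. h m v * Aj v)"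
    proof (rule contour_integral_eq)
      fix v assume "v \<in> path_image Cv"
      then have v: "v \<in> Sv" by (simp add: piCv)
      from sums_mult[OF Rsum[OF v], of "h m v"]
      show "(\<Sum>n. R n * (h m v * A n v)) = h m v * Aj v"
        by (simp add: sums_iff mult_ac)
    qed
    have fe: "(\<lambda>n. P m * Q \<alpha> t 1 1 (int (Suc m)) (int (Suc n)) * R n)
        = (\<lambda>n. P m * c0 / d * (R n * contour_integral Cv (\<lambda>v. h m v * A n v)))"
      unfolding Qmn by (rule ext) (simp add: mult_ac)
    from sums_mult[OF s[unfolded e1 e2], of "P m * c0 / d"]
    show ?thesis unfolding fe .
  qed
  have hsum: "(\<lambda>m. P m * h m v) sums (contour_integral Cw (\<lambda>w. KK v w * Ai w) / d)" if v: "v \<in> Sv" for v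
  proof -
    have s: "(\<lambda>m. contour_integral Cw (\<lambda>w. P m * (KK v w * A m w))) sums
        contour_integral Cw (\<lambda>w. \<Sum>m. P m * (KK v w * A m w))"
      unfolding Cw_def
    proof (rule cint_series_circ[where M = "\<lambda>m. P' m * (2/5)^m * KEB"])
      show "0 < \<alpha> + 3" using \<alpha> by simp
      show "continuous_on (sphere (1/2) (\<alpha>+3)) (\<lambda>w. P m * (KK v w * A m w))" for m
        unfolding Sw_def[symmetric] by (intro continuous_intros contKAw v)
      show "summable (\<lambda>m. P' m * (2/5)^m * KEB)"
        by (intro summable_mult2 summP)
      show "norm (P m * (KK v w * A m w)) \<le> P' m * (2/5)^m * KEB"
        if "w \<in> sphere (1/2) (\<alpha>+3)" for m w
      proof -
        have w: "w \<in> Sw" using that by (simp add: Sw_def)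
        have "norm (P m * (KK v w * A m w)) = P' m * norm (KK v w * A m w)"
          by (simp add: norm_mult nP)
        also have "\<dots> \<le> P' m * (KEB * (2/5)^m)"
          by (intro mult_left_mono KAb v w P'0)
        finally show ?thesis by (simp add: mult_ac)
      qed
    qed
    have e1: "contour_integral Cw (\<lambda>w. P m * (KK v w * A m w)) = P m * contour_integral Cw (\<lambda>w. KK v w * A m w)" for m
      by (rule contour_integral_lmul[OF intCw[OF contKAw[OF v]]])
    have e2: "contour_integral Cw (\<lambda>w. \<Sum>m. P m * (KK v w * A m w)) = contour_integral Cw (\<lambda>w. KK v w * Ai w)"
    proof (rule contour_integral_eq)
      fix w assume "w \<in> path_image Cw"
      then have w: "w \<in> Sw" by (simp add: piCw)
      from sums_mult[OF Psum[OF w], of "KK v w"]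
      show "(\<Sum>m. P m * (KK v w * A m w)) = KK v w * Ai w"
        by (simp add: sums_iff mult_ac)
    qed
    from sums_divide[OF s[unfolded e1 e2], of d]
    show ?thesis by (simp add: h_def)
  qed
  have outer: "(\<lambda>m. P m * c0 / d * contour_integral Cv (\<lambda>v. h m v * Aj v)) sums
      (c0 * contour_integral Cv (\<lambda>v. (contour_integral Cw (\<lambda>w. KK v w * Ai w) / d) * Aj v) / d)"
  proof -
    have s: "(\<lambda>m. contour_integral Cv (\<lambda>v. P m * (h m v * Aj v))) sums
        contour_integral Cv (\<lambda>v. \<Sum>m. P m * (h m v * Aj v))"
      unfolding Cv_def
    proof (rule cint_series_circ[where M = "\<lambda>m. P' m * (2/5)^m * (KEB * (\<alpha>+3) * AJB)"])
      show "0 < \<alpha> + 2" using \<alpha> by simp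
      show "continuous_on (sphere (1/2) (\<alpha>+2)) (\<lambda>v. P m * (h m v * Aj v))" for m
        unfolding Sv_def[symmetric] by (intro continuous_intros hcont contAj)
      show "summable (\<lambda>m. P' m * (2/5)^m * (KEB * (\<alpha>+3) * AJB))"
        by (intro summable_mult2 summP)
      show "norm (P m * (h m v * Aj v)) \<le> P' m * (2/5)^m * (KEB * (\<alpha>+3) * AJB)"
        if "v \<in> sphere (1/2) (\<alpha>+2)" for m v
      proof -
        have v: "v \<in> Sv" using that by (simp add: Sv_def)
        have "norm (P m * (h m v * Aj v)) = P' m * (norm (h m v) * norm (Aj v))"
          by (simp add: norm_mult nP)
        also have "\<dots> \<le> P' m * ((KEB * (2/5)^m * (\<alpha>+3)) * AJB)"
          by (intro mult_left_mono mult_mono hbound v AJB P'0) (use KEB0 \<alpha> in auto)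
        finally show ?thesis by (simp add: mult_ac)
      qed
    qed
    have e1: "contour_integral Cv (\<lambda>v. P m * (h m v * Aj v)) = P m * contour_integral Cv (\<lambda>v. h m v * Aj v)" for m
      by (rule contour_integral_lmul[OF intCv]) (intro continuous_intros hcont contAj)
    have e2: "contour_integral Cv (\<lambda>v. \<Sum>m. P m * (h m v * Aj v))
        = contour_integral Cv (\<lambda>v. (contour_integral Cw (\<lambda>w. KK v w * Ai w) / d) * Aj v)"
    proof (rule contour_integral_eq)
      fix v assume "v \<in> path_image Cv"
      then have v: "v \<in> Sv" by (simp add: piCv)
      from sums_mult2[OF hsum[OF v], of "Aj v"]
      show "(\<Sum>m. P m * (h m v * Aj v)) = (contour_integral Cw (\<lambda>w. KK v w * Ai w) / d) * Aj v"
        by (simp add: sums_iff mult_ac)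
    qed
    from sums_mult[OF s[unfolded e1 e2], of "c0 / d"]
    show ?thesis by (simp add: mult_ac)
  qed
  have "(\<lambda>x. \<Sum>y. of_nat (Theta i (Suc x)) * Q \<alpha> t 1 1 (int (Suc x)) (int (Suc y)) * of_nat (Theta j (Suc y)))
      = (\<lambda>m. P m * c0 / d * contour_integral Cv (\<lambda>v. h m v * Aj v))"
    using inner by (simp add: fun_eq_iff ThP ThR sums_iff)
  then show ?thesis using outer Qij by (simp add: sums_iff)
qed


theorem lemmaB3:
  fixes \<alpha> t :: real and N i j :: nat
  assumes "\<alpha> \<ge> 0" and "t \<ge> 0" and "N \<ge> 1"
    and "1 \<le> i" and "i \<le> N" and "1 \<le> j" and "j \<le> N"
  shows "(\<Sum>x. \<Sum>y. of_nat (Theta i (Suc x)) * Q \<alpha> t 1 1 (int (Suc x)) (int (Suc y))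
                     * of_nat (Theta j (Suc y)))
         = Q \<alpha> t (int i + 1) (int j + 1) 1 1"
  by (rule lemmaB3_main[OF assms(1) assms(4) assms(6)])

end
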